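(* Consider an ROS system with $n$ bidders and $k$ items in the smooth limit, but where each item is sold by a first-price auction (the winner pays its own bid). Then, regardless of the number of bidders, items and of the valuation distribution, every solution of $\frac{dm_i}{dt}=U_i(m)$, $i=1,\dots,n$, with initial condition $m(0)\in(0,\infty)^n$ converges to the vector of multipliers $(1,1,\dots,1)$.
   Context: Bidder $i$ uses a multiplier $m_i$ and bids $b_{ij}=m_iv_{ij}$ on item $j$. In the first-price auction the highest bid wins (ties split uniformly at random), $x_{ij}\in[0,1]$ is the winning probability and the payment is $p_{ij}=x_{ij}b_{ij}$. Smooth limit: the valuation vector $v=(v_{ij})$ is random with a positive $C^1$ density on a box $[0,M]^{nk}$, and $U_i(m)=\mathbb E[\sum_j v_{ij}x_{ij}(m)-p_{ij}(m)]$. *)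

theory Defs
  imports "HOL-Analysis.Analysis"
begin

text \<open>Bidders are indexed by a finite type 'n, items by a finite type 'k.
  A valuation profile is v :: real^'k^'n, with v$i$j the value of bidder i for item j.
  A multiplier profile is m :: real^'n.\<close>

definition bid :: "real^'n \<Rightarrow> real^'k^'n \<Rightarrow> 'n::finite \<Rightarrow> 'k::finite \<Rightarrow> real" where
  "bid m v i j = m$i * v$i$j"

definition win_prob :: "real^'n \<Rightarrow> real^'k^'n \<Rightarrow> 'n::finite \<Rightarrow> 'k::finite \<Rightarrow> real" where
  "win_prob m v i j =
     (let W = {l. \<forall>l'. bid m v l' j \<le> bid m v l j}
      in if i \<in> W then 1 / real (card W) else 0)"

definition fp_payment :: "real^'n \<Rightarrow> real^'k^'n \<Rightarrow> 'n::finite \<Rightarrow> 'k::finite \<Rightarrow> real" where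
  "fp_payment m v i j = win_prob m v i j * bid m v i j"

definition val_box :: "real \<Rightarrow> (real^'k::finite^'n::finite) set" where
  "val_box M = cbox 0 (\<chi> i j. M)"

definition smooth_density :: "real \<Rightarrow> (real^'k::finite^'n::finite \<Rightarrow> real) \<Rightarrow> bool" where
  "smooth_density M f \<longleftrightarrow>
     0 < M \<and>
     (\<forall>v \<in> val_box M. 0 < f v) \<and>
     (\<forall>v. v \<notin> val_box M \<longrightarrow> f v = 0) \<and>
     (f has_integral 1) (val_box M) \<and>
     (\<exists>f'. (\<forall>v \<in> val_box M. (f has_derivative blinfun_apply (f' v)) (at v within val_box M))
           \<and> continuous_on (val_box M) f')"

definition fp_utility :: "real \<Rightarrow> (real^'k::finite^'n::finite \<Rightarrow> real) \<Rightarrow> real^'n \<Rightarrow> 'n \<Rightarrow> real" where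
  "fp_utility M f m i =
     integral (val_box M)
       (\<lambda>v. f v * (\<Sum>j\<in>UNIV. v$i$j * win_prob m v i j - fp_payment m v i j))"

end

theory Submission
  imports Defs
begin

lemma mem_cbox_vec: "(v::'a::euclidean_space^'n::finite) \<in> cbox a b \<longleftrightarrow> (\<forall>l. v$l \<in> cbox (a$l) (b$l))"
proof -
  have "v \<in> cbox a b \<longleftrightarrow> (\<forall>l. \<forall>u\<in>Basis. a$l \<bullet> u \<le> v$l \<bullet> u \<and> v$l \<bullet> u \<le> b$l \<bullet> u)"
    unfolding mem_box Basis_vec_def by (simp add: inner_axis)
  then show ?thesis by (simp add: mem_box)
qed

lemma mem_cbox2: "(v::real^'k::finite^'n::finite) \<in> cbox a b \<longleftrightarrow> (\<forall>l j. a$l$j \<le> v$l$j \<and> v$l$j \<le> b$l$j)"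
  unfolding mem_cbox_vec mem_box_cart by simp

lemma content_pos2:
  assumes "\<And>l j. a$l$j < (b::real^'k::finite^'n::finite)$l$j"
  shows "0 < measure lborel (cbox a b)"
proof -
  have "\<forall>u\<in>Basis. a \<bullet> u < b \<bullet> u"
  proof
    fix u :: "real^'k^'n" assume "u \<in> Basis"
    then obtain l w where u: "u = axis l w" and w: "w \<in> (Basis :: (real^'k) set)"
      unfolding Basis_vec_def by auto
    then obtain j where w': "w = axis j 1"
      unfolding Basis_vec_def by auto
    show "a \<bullet> u < b \<bullet> u" unfolding u w' by (simp add: inner_axis assms)
  qed
  then show ?thesis by (simp add: content_pos_lt_eq)
qed

lemma decr:
  fixes g :: "real \<Rightarrow> real"
  assumes d: "\<And>t. t \<ge> 0 \<Longrightarrow> (g has_real_derivative g' t) (at t within {0..})"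
    and n: "\<And>t. t \<ge> 0 \<Longrightarrow> g' t \<le> 0"
    and ab: "0 \<le> a" "a \<le> b"
  shows "g b \<le> g a"
proof -
  have "\<exists>x\<in>{a..b}. g b - g a = (\<lambda>h. g' x * h) (b - a)"
  proof (rule mvt_very_simple[OF ab(2)])
    fix x assume x: "a \<le> x" "x \<le> b"
    have "(g has_real_derivative g' x) (at x within {a..b})"
      by (rule has_field_derivative_subset[OF d]) (use ab x in auto)
    then show "(g has_derivative (\<lambda>h. g' x * h)) (at x within {a..b})"
      using has_field_derivative_def by blast
  qed
  then obtain x where x: "x \<in> {a..b}" "g b - g a = g' x * (b - a)" by auto
  have "g' x * (b - a) \<le> 0" using n[of x] x(1) ab by (intro mult_nonpos_nonneg) auto
  then show ?thesis using x by simp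
qed

lemma util_form:
  "fp_utility M f mm l = (1 - mm$l) * integral (val_box M) (\<lambda>v. f v * (\<Sum>j\<in>UNIV. v$l$j * win_prob mm v l j))"
proof -
  have "(\<lambda>v. f v * (\<Sum>j\<in>UNIV. v$l$j * win_prob mm v l j - fp_payment mm v l j))
      = (\<lambda>v. (1 - mm$l) * (f v * (\<Sum>j\<in>UNIV. v$l$j * win_prob mm v l j)))"
    unfolding fp_payment_def bid_def
    by (auto simp: sum_distrib_left algebra_simps sum_subtractf)
  then show ?thesis unfolding fp_utility_def by simp
qed



lemma win_prob_eq:
  "win_prob m v i j = (\<Sum>S\<in>UNIV. (if {l. \<forall>l'. bid m v l' j \<le> bid m v l j} = S then (if i \<in> S then 1 / real (card S) else 0) else 0))"
  unfolding win_prob_def Let_def by (simp add: sum.delta)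

lemma cont_comp: "continuous_on UNIV (\<lambda>v::real^'k::finite^'n::finite. v$l$j)"
  by (intro continuous_intros)

lemma pred_W: "{v::real^'k::finite^'n::finite. {l. \<forall>l'. bid m v l' j \<le> bid m v l j} = S} \<in> sets borel"
proof -
  define C where "C l = {v::real^'k::finite^'n::finite. \<forall>l'. bid m v l' j \<le> bid m v l j}" for l
  have Cc: "closed (C l)" for l
    unfolding C_def bid_def
    by (intro closed_Collect_all closed_Collect_le continuous_intros)
  have "{v::real^'k::finite^'n::finite. {l. \<forall>l'. bid m v l' j \<le> bid m v l j} = S}
     = (\<Inter>l\<in>UNIV. (if l \<in> S then C l else - C l))"
  proof (rule set_eqI)
    fix v
    have "({l. \<forall>l'. bid m v l' j \<le> bid m v l j} = S) \<longleftrightarrow> (\<forall>l. l \<in> S \<longleftrightarrow> v \<in> C l)"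
      unfolding C_def by auto
    then show "v \<in> {v. {l. \<forall>l'. bid m v l' j \<le> bid m v l j} = S} \<longleftrightarrow> v \<in> (\<Inter>l\<in>UNIV. (if l \<in> S then C l else - C l))"
      by (auto split: if_splits)
  qed
  also have "\<dots> \<in> sets borel"
    using Cc by (intro sets.finite_INT) auto
  finally show ?thesis .
qed

lemma win_prob_meas: "(\<lambda>v. win_prob m v i j) \<in> borel_measurable borel"
  unfolding win_prob_eq
  apply (intro borel_measurable_sum)
  apply (rule measurable_If)
  using pred_W[of m j] by auto

lemma h_meas: "(\<lambda>v::real^'k::finite^'n::finite. \<Sum>j\<in>UNIV. v$i$j * win_prob m v i j) \<in> borel_measurable borel"
  apply (intro borel_measurable_sum borel_measurable_times win_prob_meas)
  using borel_measurable_continuous_onI[OF cont_comp] by auto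

lemma integrable_main:
  fixes f :: "real^'k::finite^'n::finite \<Rightarrow> real"
  assumes fc: "continuous_on (val_box M) f"
  shows "(\<lambda>v. f v * (\<Sum>j\<in>UNIV. v$i$j * win_prob m v i j)) integrable_on (val_box M)"
proof -
  have S: "val_box M \<in> sets lebesgue" unfolding val_box_def by simp
  have cpt: "compact (val_box M)" unfolding val_box_def by simp
  obtain B where B: "\<And>v. v \<in> val_box M \<Longrightarrow> norm (f v) \<le> B"
    using compact_imp_bounded[OF compact_continuous_image[OF fc cpt]] unfolding bounded_iff by auto
  have wb: "0 \<le> win_prob m v i j \<and> win_prob m v i j \<le> 1" for v :: "real^'k^'n" and j :: 'k
  proof -
    define W where "W = {l. \<forall>l'. bid m v l' j \<le> bid m v l j}"
    have "i \<in> W \<Longrightarrow> 1 \<le> real (card W)"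
      using card_gt_0_iff[of W] by fastforce
    then show ?thesis unfolding win_prob_def Let_def W_def[symmetric] by auto
  qed
  have vb: "v \<in> val_box M \<Longrightarrow> 0 \<le> v$i$j \<and> v$i$j \<le> M" for v :: "real^'k^'n" and j :: 'k
    unfolding val_box_def mem_cbox2 by simp
  have hb: "v \<in> val_box M \<Longrightarrow> norm (\<Sum>j\<in>UNIV. v$i$j * win_prob m v i j) \<le> real CARD('k) * M" for v :: "real^'k^'n"
  proof -
    assume v: "v \<in> val_box M"
    have "norm (\<Sum>j\<in>UNIV. v$i$j * win_prob m v i j) \<le> (\<Sum>j\<in>UNIV. norm (v$i$j * win_prob m v i j))"
      by (rule norm_sum)
    also have "\<dots> \<le> (\<Sum>j\<in>(UNIV::'k set). M)"
    proof (intro sum_mono)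
      fix j :: 'k
      have a1: "0 \<le> v$i$j" "v$i$j \<le> M" using vb[OF v] by auto
      have a2: "0 \<le> win_prob m v i j" "win_prob m v i j \<le> 1" using wb by auto
      have "v$i$j * win_prob m v i j \<le> M * 1" by (rule mult_mono) (use a1 a2 in auto)
      then show "norm (v$i$j * win_prob m v i j) \<le> M" using a1 a2 by simp
    qed
    finally have "norm (\<Sum>j\<in>UNIV. v$i$j * win_prob m v i j) \<le> (\<Sum>j\<in>(UNIV::'k set). M)" .
    then show ?thesis by simp
  qed
  have meas: "(\<lambda>v. f v * (\<Sum>j\<in>UNIV. v$i$j * win_prob m v i j)) \<in> borel_measurable (lebesgue_on (val_box M))"
  proof (intro borel_measurable_times)
    show "f \<in> borel_measurable (lebesgue_on (val_box M))"
      using continuous_imp_measurable_on_sets_lebesgue[OF fc S] .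
    show "(\<lambda>v. \<Sum>j\<in>UNIV. v$i$j * win_prob m v i j) \<in> borel_measurable (lebesgue_on (val_box M))"
      by (rule measurable_restrict_space1, rule borel_measurable_subalgebra[OF _ _ h_meas]) auto
  qed
  show ?thesis
  proof (rule measurable_bounded_by_integrable_imp_integrable)
    show "(\<lambda>v. f v * (\<Sum>j\<in>UNIV. v$i$j * win_prob m v i j)) \<in> borel_measurable (lebesgue_on (val_box M))"
      by (rule meas)
    show "(\<lambda>v. B * (real CARD('k) * M)) integrable_on val_box M"
      unfolding val_box_def by (rule integrable_const)
    fix v :: "real^'k^'n" assume v: "v \<in> val_box M"
    show "norm (f v * (\<Sum>j\<in>UNIV. v$i$j * win_prob m v i j)) \<le> B * (real CARD('k) * M)"
      unfolding norm_mult using B[OF v] hb[OF v] by (intro mult_mono) auto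
  qed (rule S)
qed


lemma Gbound:
  fixes f :: "real^'k::finite^'n::finite \<Rightarrow> real"
  assumes Mpos: "0 < M" and fpos: "\<forall>v\<in>val_box M. 0 < f v" and fc: "continuous_on (val_box M) f"
    and lo: "0 < lo" "lo \<le> hi"
  shows "\<exists>c>0. \<forall>mm. (\<forall>l. lo \<le> mm$l \<and> mm$l \<le> hi) \<longrightarrow>
           c \<le> integral (val_box M) (\<lambda>v. f v * (\<Sum>j\<in>UNIV. v$i$j * win_prob mm v i j))"
proof -
  obtain j0 :: 'k where "True" by simp
  define eps where "eps = lo * M / (4 * hi)"
  have hipos: "0 < hi" using lo by simp
  have eps0: "0 < eps" unfolding eps_def using lo hipos Mpos by simp
  have epsM: "eps \<le> M" unfolding eps_def using lo hipos Mpos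
    by (simp add: divide_le_eq mult_right_mono)
  have epshi: "hi * eps < lo * (M/2)" unfolding eps_def using lo hipos Mpos by (simp add: field_simps)
  define a :: "real^'k^'n" where "a = (\<chi> l j. if l = i \<and> j = j0 then M/2 else 0)"
  define b :: "real^'k^'n" where "b = (\<chi> l j. if l \<noteq> i \<and> j = j0 then eps else M)"
  define B where "B = cbox a b"
  have Bsub: "B \<subseteq> val_box M"
  proof
    fix v assume v: "v \<in> B"
    show "v \<in> val_box M" unfolding val_box_def mem_cbox2
    proof (intro allI)
      fix l j
      have "a$l$j \<le> v$l$j \<and> v$l$j \<le> b$l$j" using v unfolding B_def mem_cbox2 by blast
      then show "(0::real^'k^'n)$l$j \<le> v$l$j \<and> v$l$j \<le> (\<chi> i j. M)$l$j"
        using epsM eps0 Mpos by (auto simp: a_def b_def split: if_splits)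
    qed
  qed
  have ab: "a$l$j < b$l$j" for l j using eps0 Mpos by (auto simp: a_def b_def)
  have aB: "a \<in> B" unfolding B_def mem_cbox2 using ab by (simp add: less_imp_le)
  have cB: "0 < Henstock_Kurzweil_Integration.content B" unfolding B_def by (rule content_pos2[OF ab])
  obtain v0 where v0: "v0 \<in> B" "\<forall>v\<in>B. f v0 \<le> f v"
    using continuous_attains_inf[OF _ _ continuous_on_subset[OF fc Bsub]] aB unfolding B_def by auto
  have fv0: "0 < f v0" using fpos v0(1) Bsub by auto
  define \<kappa> where "\<kappa> = f v0 * (M/2)"
  have kpos: "0 < \<kappa>" unfolding \<kappa>_def using fv0 Mpos by simp
  show ?thesis
  proof (intro exI[of _ "Henstock_Kurzweil_Integration.content B * \<kappa>"] conjI allI impI)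
    show "0 < Henstock_Kurzweil_Integration.content B * \<kappa>" using cB kpos by simp
    fix mm :: "real^'n" assume reg: "\<forall>l. lo \<le> mm$l \<and> mm$l \<le> hi"
    let ?g = "\<lambda>v. f v * (\<Sum>j\<in>UNIV. v$i$j * win_prob mm v i j)"
    have int: "?g integrable_on val_box M" by (rule integrable_main[OF fc])
    have intB: "?g integrable_on B" unfolding B_def
      by (rule integrable_on_subcbox[OF int]) (use Bsub B_def in simp)
    have vbox: "v \<in> val_box M \<Longrightarrow> 0 \<le> v$l$j" for v :: "real^'k^'n" and l j unfolding val_box_def mem_cbox2 by simp
    have wb: "0 \<le> win_prob mm v i j" for v :: "real^'k^'n" and j unfolding win_prob_def Let_def by auto
    have gnn: "0 \<le> ?g v" if v: "v \<in> val_box M" for v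
    proof (rule mult_nonneg_nonneg)
      show "0 \<le> f v" using fpos v by (simp add: less_imp_le)
      show "0 \<le> (\<Sum>j\<in>UNIV. v$i$j * win_prob mm v i j)"
        using vbox[OF v] wb by (intro sum_nonneg mult_nonneg_nonneg) auto
    qed
    have lowg: "\<kappa> \<le> ?g v" if v: "v \<in> B" for v
    proof -
      have vab: "a$l$j \<le> v$l$j \<and> v$l$j \<le> b$l$j" for l j using v unfolding B_def mem_cbox2 by blast
      have vi: "M/2 \<le> v$i$j0" using vab[of i j0] by (simp add: a_def)
      have vl: "v$l$j0 \<le> eps" if "l \<noteq> i" for l using vab[of l j0] that by (simp add: b_def)
      have vnn: "0 \<le> v$l$j" for l j using vbox Bsub v by auto
      have mi: "lo \<le> mm$i" using reg by blast
      have bi: "lo * (M/2) \<le> bid mm v i j0" unfolding bid_def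
        using mi vi lo Mpos by (intro mult_mono) auto
      have bl: "bid mm v l j0 \<le> hi * eps" if "l \<noteq> i" for l unfolding bid_def
        using reg vl[OF that] vnn[of l j0] hipos by (intro mult_mono) auto
      have W: "{l. \<forall>l'. bid mm v l' j0 \<le> bid mm v l j0} = {i}"
      proof (intro set_eqI iffI)
        fix l assume "l \<in> {l. \<forall>l'. bid mm v l' j0 \<le> bid mm v l j0}"
        then have le: "bid mm v i j0 \<le> bid mm v l j0" by auto
        show "l \<in> {i}"
        proof (rule ccontr)
          assume "l \<notin> {i}"
          then have "bid mm v l j0 \<le> hi * eps" using bl by auto
          then show False using le bi epshi by linarith
        qed
      next
        fix l assume "l \<in> {i}"
        then have li: "l = i" by simp
        have "bid mm v l' j0 \<le> bid mm v i j0" for l'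
        proof (cases "l' = i")
          case False
          then have "bid mm v l' j0 \<le> hi * eps" using bl by auto
          then show ?thesis using bi epshi by linarith
        qed simp
        then show "l \<in> {l. \<forall>l'. bid mm v l' j0 \<le> bid mm v l j0}" using li by simp
      qed
      have w1: "win_prob mm v i j0 = 1" unfolding win_prob_def Let_def W by simp
      have "M/2 \<le> (\<Sum>j\<in>UNIV. v$i$j * win_prob mm v i j)"
      proof -
        have "v$i$j0 * win_prob mm v i j0 \<le> (\<Sum>j\<in>UNIV. v$i$j * win_prob mm v i j)"
          by (rule member_le_sum) (use vnn wb in auto)
        then show ?thesis using vi w1 by simp
      qed
      moreover have "f v0 \<le> f v" using v0 v by auto
      ultimately show ?thesis unfolding \<kappa>_def using fv0 Mpos by (intro mult_mono) auto
    qed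
    have "Henstock_Kurzweil_Integration.content B * \<kappa> = integral B (\<lambda>v. \<kappa>)" unfolding B_def by simp
    also have "\<dots> \<le> integral B ?g"
      by (rule integral_le) (use intB lowg in \<open>auto simp: B_def\<close>)
    also have "\<dots> \<le> integral (val_box M) ?g"
      by (rule integral_subset_le[OF Bsub intB int]) (use gnn in auto)
    finally show "Henstock_Kurzweil_Integration.content B * \<kappa> \<le> integral (val_box M) ?g" .
  qed
qed


theorem lemma3:
  fixes M :: real
    and f :: "real^'k::finite^'n::finite \<Rightarrow> real"
    and m :: "real \<Rightarrow> real^'n"
  assumes dens: "smooth_density M f"
    and ode: "\<And>t. t \<ge> 0 \<Longrightarrow>
       (m has_vector_derivative (\<chi> i. fp_utility M f (m t) i)) (at t within {0..})"
    and init: "\<And>i. m 0 $ i > 0"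
  shows "(m \<longlongrightarrow> (\<chi> i. 1)) at_top"
proof -
  from dens have Mpos: "0 < M" and fpos: "\<forall>v\<in>val_box M. 0 < f v"
    and fder: "\<exists>f'. (\<forall>v \<in> val_box M. (f has_derivative blinfun_apply (f' v)) (at v within val_box M))"
    unfolding smooth_density_def by auto
  have fc: "continuous_on (val_box M) f"
  proof -
    from fder obtain f' where "\<forall>v \<in> val_box M. (f has_derivative blinfun_apply (f' v)) (at v within val_box M)"
      by auto
    then show ?thesis unfolding continuous_on_eq_continuous_within
      using has_derivative_continuous by blast
  qed
  define G where "G mm l = integral (val_box M) (\<lambda>v. f v * (\<Sum>j\<in>UNIV. v$l$j * win_prob mm v l j))"
    for mm :: "real^'n" and l
  have Uf: "fp_utility M f mm l = (1 - mm$l) * G mm l" for mm l unfolding G_def by (rule util_form)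
  have vbox: "v \<in> val_box M \<Longrightarrow> 0 \<le> v$l$j" for v :: "real^'k^'n" and l j
    unfolding val_box_def mem_cbox2 by simp
  have wb: "0 \<le> win_prob mm v l j" for mm v l j unfolding win_prob_def Let_def by auto
  have G0: "0 \<le> G mm l" for mm l
    unfolding G_def
  proof (rule integral_nonneg[OF integrable_main[OF fc]])
    fix v :: "real^'k^'n" assume v: "v \<in> val_box M"
    show "0 \<le> f v * (\<Sum>j\<in>UNIV. v$l$j * win_prob mm v l j)"
    proof (rule mult_nonneg_nonneg)
      show "0 \<le> f v" using fpos v by (simp add: less_imp_le)
      show "0 \<le> (\<Sum>j\<in>UNIV. v$l$j * win_prob mm v l j)"
        using vbox[OF v] wb by (intro sum_nonneg mult_nonneg_nonneg) auto
    qed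
  qed
  have xd: "((\<lambda>t. m t $ l) has_real_derivative fp_utility M f (m t) l) (at t within {0..})"
    if t: "t \<ge> 0" for t l
  proof -
    from bounded_linear.has_vector_derivative[OF bounded_linear_vec_nth ode[OF t], of l]
    show ?thesis by (simp add: has_real_derivative_iff_has_vector_derivative)
  qed
  have hmono: "(m b $ l - 1)^2 \<le> (m a $ l - 1)^2" if ab: "0 \<le> a" "a \<le> b" for a b l
  proof (rule decr[where g = "\<lambda>t. (m t $ l - 1)^2" and g' = "\<lambda>t. 2 * (m t $ l - 1) * fp_utility M f (m t) l"])
    fix t :: real assume t: "0 \<le> t"
    show "((\<lambda>t. (m t $ l - 1)^2) has_real_derivative 2 * (m t $ l - 1) * fp_utility M f (m t) l) (at t within {0..})"
      using xd[OF t, of l] by (auto intro!: derivative_eq_intros)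
    have "2 * (m t $ l - 1) * fp_utility M f (m t) l = - (2 * (m t $ l - 1)^2 * G (m t) l)"
      unfolding Uf by (simp add: power2_eq_square algebra_simps)
    also have "\<dots> \<le> 0" using G0[of "m t" l] by simp
    finally show "2 * (m t $ l - 1) * fp_utility M f (m t) l \<le> 0" .
  qed (use ab in auto)
  have xc: "continuous_on {0..T} (\<lambda>t. m t $ l)" for T l
    unfolding continuous_on_eq_continuous_within
  proof
    fix t assume t: "t \<in> {0..T}"
    have "continuous (at t within {0..}) (\<lambda>t. m t $ l)"
      using xd[of t l] t has_derivative_continuous has_field_derivative_def by fastforce
    then show "continuous (at t within {0..T}) (\<lambda>t. m t $ l)"
      by (rule continuous_within_subset) auto
  qed
  have lowb: "min (m 0 $ l) 1 \<le> m t $ l" if t: "0 \<le> t" for t l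
  proof (cases "m 0 $ l < 1")
    case True
    have "(m t $ l - 1)^2 \<le> (m 0 $ l - 1)^2" using hmono[of 0 t l] t by simp
    then have "\<bar>m t $ l - 1\<bar> \<le> \<bar>m 0 $ l - 1\<bar>" by (simp add: abs_le_square_iff)
    then show ?thesis using True by auto
  next
    case False
    have "1 \<le> m t $ l"
    proof (rule ccontr)
      assume "\<not> 1 \<le> m t $ l"
      then have lt: "m t $ l < 1" by simp
      obtain s where s: "0 \<le> s" "s \<le> t" "m s $ l = 1"
        using IVT2'[of "\<lambda>t. m t $ l" t 1 0, OF _ _ t xc] lt False by auto
      have "(m t $ l - 1)^2 \<le> (m s $ l - 1)^2" using hmono[of s t l] s by simp
      then show False using s lt by simp
    qed
    then show ?thesis by simp
  qed
  have upb: "m t $ l \<le> 1 + \<bar>m 0 $ l - 1\<bar>" if t: "0 \<le> t" for t l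
  proof -
    have "(m t $ l - 1)^2 \<le> (m 0 $ l - 1)^2" using hmono[of 0 t l] t by simp
    then have "\<bar>m t $ l - 1\<bar> \<le> \<bar>m 0 $ l - 1\<bar>" by (simp add: abs_le_square_iff)
    then show ?thesis by auto
  qed
  define lo where "lo = Min (range (\<lambda>l. min (m 0 $ l) 1))"
  define hi where "hi = Max (range (\<lambda>l. 1 + \<bar>m 0 $ l - 1\<bar>))"
  have lo_le: "lo \<le> min (m 0 $ l) 1" for l unfolding lo_def by (rule Min_le) auto
  have hi_ge: "1 + \<bar>m 0 $ l - 1\<bar> \<le> hi" for l unfolding hi_def by (rule Max_ge) auto
  have lo0: "0 < lo" unfolding lo_def using init by (subst Min_gr_iff) auto
  have lohi: "lo \<le> hi"
  proof -
    have "lo \<le> 1" using lo_le[of undefined] by simp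
    moreover have "1 \<le> hi" using hi_ge[of undefined] by (smt (verit) abs_ge_zero)
    ultimately show ?thesis by simp
  qed
  have region: "\<forall>l. lo \<le> m t $ l \<and> m t $ l \<le> hi" if t: "0 \<le> t" for t
    using lo_le hi_ge lowb[OF t] upb[OF t] order_trans by blast
  show ?thesis
  proof (rule vec_tendstoI)
    fix i
    obtain c where c: "0 < c" and cG: "\<And>mm. (\<forall>l. lo \<le> mm$l \<and> mm$l \<le> hi) \<Longrightarrow> c \<le> G mm i"
      using Gbound[OF Mpos fpos fc lo0 lohi, of i] unfolding G_def by blast
    have qmono: "exp (2*c*t) * (m t $ i - 1)^2 \<le> exp (2*c*0) * (m 0 $ i - 1)^2" if t: "0 \<le> t" for t
    proof (rule decr[where g = "\<lambda>t. exp (2*c*t) * (m t $ i - 1)^2"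
          and g' = "\<lambda>t. exp (2*c*t) * (2*c) * (m t $ i - 1)^2 + exp (2*c*t) * (2 * (m t $ i - 1) * fp_utility M f (m t) i)"])
      fix t :: real assume t: "0 \<le> t"
      show "((\<lambda>t. exp (2*c*t) * (m t $ i - 1)^2) has_real_derivative
          exp (2*c*t) * (2*c) * (m t $ i - 1)^2 + exp (2*c*t) * (2 * (m t $ i - 1) * fp_utility M f (m t) i)) (at t within {0..})"
        using xd[OF t, of i] by (auto intro!: derivative_eq_intros)
      have "exp (2*c*t) * (2*c) * (m t $ i - 1)^2 + exp (2*c*t) * (2 * (m t $ i - 1) * fp_utility M f (m t) i)
          = 2 * exp (2*c*t) * (m t $ i - 1)^2 * (c - G (m t) i)"
        unfolding Uf by (simp add: power2_eq_square algebra_simps)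
      also have "\<dots> \<le> 0"
        using cG[OF region[OF t]] by (intro mult_nonneg_nonpos) auto
      finally show "exp (2*c*t) * (2*c) * (m t $ i - 1)^2 + exp (2*c*t) * (2 * (m t $ i - 1) * fp_utility M f (m t) i) \<le> 0" .
    qed (use t in auto)
    have bound: "\<bar>m t $ i - 1\<bar> \<le> \<bar>m 0 $ i - 1\<bar> * exp (- (c * t))" if t: "0 \<le> t" for t
    proof -
      have e: "exp (2*c*t) = exp (c*t)^2" by (simp add: power2_eq_square flip: exp_add)
      have "(exp (c*t) * (m t $ i - 1))^2 \<le> (m 0 $ i - 1)^2"
        using qmono[OF t] e by (simp add: power_mult_distrib)
      then have "\<bar>exp (c*t) * (m t $ i - 1)\<bar> \<le> \<bar>m 0 $ i - 1\<bar>" by (simp add: abs_le_square_iff)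
      then have "exp (c*t) * \<bar>m t $ i - 1\<bar> \<le> \<bar>m 0 $ i - 1\<bar>" by (simp add: abs_mult)
      then show ?thesis by (simp add: exp_minus field_simps)
    qed
    have lim0: "((\<lambda>t. \<bar>m 0 $ i - 1\<bar> * exp (- (c * t))) \<longlongrightarrow> 0) at_top"
    proof -
      have "filterlim (\<lambda>t. c * t) at_top at_top"
        by (rule filterlim_tendsto_pos_mult_at_top[OF tendsto_const c filterlim_ident])
      then have "filterlim (\<lambda>t. - (c * t)) at_bot at_top"
        by (simp add: filterlim_uminus_at_top)
      then have "((\<lambda>t. exp (- (c * t))) \<longlongrightarrow> 0) at_top"
        by (rule filterlim_compose[OF exp_at_bot])
      then show ?thesis by (rule tendsto_mult_right_zero)
    qed
    have "((\<lambda>t. m t $ i - 1) \<longlongrightarrow> 0) at_top"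
    proof (rule Lim_null_comparison[OF _ lim0])
      show "\<forall>\<^sub>F t in at_top. norm (m t $ i - 1) \<le> \<bar>m 0 $ i - 1\<bar> * exp (- (c * t))"
        using eventually_ge_at_top[of "0::real"] by eventually_elim (use bound in auto)
    qed
    then have "((\<lambda>t. m t $ i) \<longlongrightarrow> 1) at_top" by (rule LIM_zero_cancel)
    then show "((\<lambda>t. m t $ i) \<longlongrightarrow> (\<chi> i. 1) $ i) at_top" by simp
  qed
qed

end
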